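(* Let $\mathcal{Q}$ be a small involutive quantaloid and $\Psi\colon\mathbb{A}\to\mathbb{B}$ a left adjoint distributor between $\mathcal{Q}$-categories, with right adjoint $\Psi^*$. Let $\Psi_{\mathsf s}\colon\mathbb{A}_{\mathsf s}\to\mathbb{B}_{\mathsf s}$ be the distributor $\Psi_{\mathsf s}=(\mathbb{B}(S_{\mathbb{B}}-,-)\otimes\Psi\otimes\mathbb{A}(-,S_{\mathbb{A}}-))\wedge(\mathbb{A}(S_{\mathbb{A}}-,-)\otimes\Psi^*\otimes\mathbb{B}(-,S_{\mathbb{B}}-))^{\mathsf o}$, i.e. $\Psi_{\mathsf s}(b,a)=\Psi(b,a)\wedge\Psi^*(a,b)^{\mathsf o}$. Then $\Psi_{\mathsf s}\otimes(\Psi_{\mathsf s})^{\mathsf o}\le\mathbb{B}_{\mathsf s}$. Consequently $\Psi_{\mathsf s}$ is a symmetric left adjoint if and only if $\mathbb{A}_{\mathsf s}\le(\Psi_{\mathsf s})^{\mathsf o}\otimes\Psi_{\mathsf s}$; and if this holds, then $\Psi=\mathbb{B}(-,S_{\mathbb{B}}-)\otimes\Psi_{\mathsf s}\otimes\mathbb{A}(S_{\mathbb{A}}-,-)$, i.e. $\Psi(b,a)=\bigvee_{a'\in\mathbb{A}_0,b'\in\mathbb{B}_0}\mathbb{B}(b,b')\circ\Psi_{\mathsf s}(b',a')\circ\mathbb{A}(a',a)$ for all $a,b$.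
   Context: A quantaloid is a category enriched in $\mathsf{Sup}$; an involution is an identity-on-objects, direction-reversing, monotone map $f\mapsto f^{\mathsf o}$ on morphisms with $(g\circ f)^{\mathsf o}=f^{\mathsf o}\circ g^{\mathsf o}$, $f^{\mathsf{oo}}=f$. A $\mathcal{Q}$-category $\mathbb{A}$: objects with types $tx$, homs $\mathbb{A}(y,x)\colon tx\to ty$ with $\mathbb{A}(z,y)\circ\mathbb{A}(y,x)\le\mathbb{A}(z,x)$, $1_{tx}\le\mathbb{A}(x,x)$; symmetric if $\mathbb{A}(x,y)=\mathbb{A}(y,x)^{\mathsf o}$. Symmetrisation $\mathbb{A}_{\mathsf s}$: same objects and types, $\mathbb{A}_{\mathsf s}(y,x)=\mathbb{A}(y,x)\wedge\mathbb{A}(x,y)^{\mathsf o}$ (symmetric); $S_{\mathbb{A}}\colon\mathbb{A}_{\mathsf s}\to\mathbb{A}$ is the identity on objects. Distributors $\Phi\colon\mathbb{A}\to\mathbb{B}$: arrows $\Phi(y,x)\colon tx\to ty$ with $\mathbb{B}(y',y)\circ\Phi(y,x)\le\Phi(y',x)$, $\Phi(y,x)\circ\mathbb{A}(x,x')\le\Phi(y,x')$; composition $(\Psi\otimes\Phi)(z,x)=\bigvee_y\Psi(z,y)\circ\Phi(y,x)$, identities the hom-families, elementwise order and infima. $\Phi$ is a left adjoint with right adjoint $\Phi^*$ if $\mathbb{A}\le\Phi^*\otimes\Phi$ and $\Phi\otimes\Phi^*\le\mathbb{B}$. $\mathbb{A}(-,S_{\mathbb{A}}-)\colon\mathbb{A}_{\mathsf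 s}\to\mathbb{A}$ and $\mathbb{A}(S_{\mathbb{A}}-,-)\colon\mathbb{A}\to\mathbb{A}_{\mathsf s}$ both have elements $\mathbb{A}(y,x)$. For a distributor $\Phi$ between symmetric $\mathcal{Q}$-categories, $\Phi^{\mathsf o}(x,y)=\Phi(y,x)^{\mathsf o}$, and $\Phi$ is a symmetric left adjoint if it is left adjoint to $\Phi^{\mathsf o}$. *)

theory Defs
  imports Main
begin

text \<open>A (small) quantaloid: objects of type 'o, morphisms of type 'm.
  qhom X Y is the hom-set of arrows X -> Y; qcomp g f is g o f;
  qle is the order, qsup X Y S the join in qhom X Y; qinv is the involution.\<close>

record ('o, 'm) quantaloid =
  qhom  :: "'o \<Rightarrow> 'o \<Rightarrow> 'm set"
  qcomp :: "'m \<Rightarrow> 'm \<Rightarrow> 'm"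
  qid   :: "'o \<Rightarrow> 'm"
  qle   :: "'m \<Rightarrow> 'm \<Rightarrow> bool"
  qsup  :: "'o \<Rightarrow> 'o \<Rightarrow> 'm set \<Rightarrow> 'm"
  qinv  :: "'m \<Rightarrow> 'm"

definition quantaloid :: "('o, 'm, 'z) quantaloid_scheme \<Rightarrow> bool" where
  "quantaloid Q \<longleftrightarrow>
     (\<forall>X. qid Q X \<in> qhom Q X X) \<and>
     (\<forall>X Y Z f g. f \<in> qhom Q X Y \<longrightarrow> g \<in> qhom Q Y Z \<longrightarrow> qcomp Q g f \<in> qhom Q X Z) \<and>
     (\<forall>W X Y Z f g h. f \<in> qhom Q W X \<longrightarrow> g \<in> qhom Q X Y \<longrightarrow> h \<in> qhom Q Y Z \<longrightarrow>
        qcomp Q h (qcomp Q g f) = qcomp Q (qcomp Q h g) f) \<and>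
     (\<forall>X Y f. f \<in> qhom Q X Y \<longrightarrow> qcomp Q f (qid Q X) = f \<and> qcomp Q (qid Q Y) f = f) \<and>
     (\<forall>X Y f. f \<in> qhom Q X Y \<longrightarrow> qle Q f f) \<and>
     (\<forall>X Y f g. f \<in> qhom Q X Y \<longrightarrow> g \<in> qhom Q X Y \<longrightarrow> qle Q f g \<longrightarrow> qle Q g f \<longrightarrow> f = g) \<and>
     (\<forall>X Y f g h. f \<in> qhom Q X Y \<longrightarrow> g \<in> qhom Q X Y \<longrightarrow> h \<in> qhom Q X Y \<longrightarrow>
        qle Q f g \<longrightarrow> qle Q g h \<longrightarrow> qle Q f h) \<and>
     (\<forall>X Y S. S \<subseteq> qhom Q X Y \<longrightarrow>
        qsup Q X Y S \<in> qhom Q X Y \<and>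
        (\<forall>f\<in>S. qle Q f (qsup Q X Y S)) \<and>
        (\<forall>g\<in>qhom Q X Y. (\<forall>f\<in>S. qle Q f g) \<longrightarrow> qle Q (qsup Q X Y S) g)) \<and>
     (\<forall>X Y Z S g. S \<subseteq> qhom Q X Y \<longrightarrow> g \<in> qhom Q Y Z \<longrightarrow>
        qcomp Q g (qsup Q X Y S) = qsup Q X Z ((\<lambda>f. qcomp Q g f) ` S)) \<and>
     (\<forall>X Y Z S g. S \<subseteq> qhom Q Y Z \<longrightarrow> g \<in> qhom Q X Y \<longrightarrow>
        qcomp Q (qsup Q Y Z S) g = qsup Q X Z ((\<lambda>f. qcomp Q f g) ` S))"

definition involutive_quantaloid :: "('o, 'm, 'z) quantaloid_scheme \<Rightarrow> bool" where
  "involutive_quantaloid Q \<longleftrightarrow> quantaloid Q \<and>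
     (\<forall>X Y f. f \<in> qhom Q X Y \<longrightarrow> qinv Q f \<in> qhom Q Y X) \<and>
     (\<forall>X Y f g. f \<in> qhom Q X Y \<longrightarrow> g \<in> qhom Q X Y \<longrightarrow> qle Q f g \<longrightarrow> qle Q (qinv Q f) (qinv Q g)) \<and>
     (\<forall>X Y Z f g. f \<in> qhom Q X Y \<longrightarrow> g \<in> qhom Q Y Z \<longrightarrow>
        qinv Q (qcomp Q g f) = qcomp Q (qinv Q f) (qinv Q g)) \<and>
     (\<forall>X Y f. f \<in> qhom Q X Y \<longrightarrow> qinv Q (qinv Q f) = f)"

definition qmeet :: "('o, 'm, 'z) quantaloid_scheme \<Rightarrow> 'o \<Rightarrow> 'o \<Rightarrow> 'm \<Rightarrow> 'm \<Rightarrow> 'm" where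
  "qmeet Q X Y f g = qsup Q X Y {h \<in> qhom Q X Y. qle Q h f \<and> qle Q h g}"

text \<open>Q-categories: objects, types, homs (hm y x : t x -> t y).\<close>
record ('x, 'o, 'm) qcat =
  obj :: "'x set"
  ty  :: "'x \<Rightarrow> 'o"
  hm  :: "'x \<Rightarrow> 'x \<Rightarrow> 'm"

definition qcategory :: "('o, 'm, 'z) quantaloid_scheme \<Rightarrow> ('x, 'o, 'm) qcat \<Rightarrow> bool" where
  "qcategory Q A \<longleftrightarrow>
     (\<forall>x\<in>obj A. \<forall>y\<in>obj A. hm A y x \<in> qhom Q (ty A x) (ty A y)) \<and>
     (\<forall>x\<in>obj A. \<forall>y\<in>obj A. \<forall>z\<in>obj A. qle Q (qcomp Q (hm A z y) (hm A y x)) (hm A z x)) \<and>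
     (\<forall>x\<in>obj A. qle Q (qid Q (ty A x)) (hm A x x))"

definition symcat :: "('o, 'm, 'z) quantaloid_scheme \<Rightarrow> ('x, 'o, 'm) qcat \<Rightarrow> ('x, 'o, 'm) qcat" where
  "symcat Q A = A\<lparr>hm := (\<lambda>y x. qmeet Q (ty A x) (ty A y) (hm A y x) (qinv Q (hm A x y)))\<rparr>"

definition distributor :: "('o, 'm, 'z) quantaloid_scheme \<Rightarrow> ('x, 'o, 'm) qcat \<Rightarrow> ('y, 'o, 'm) qcat
     \<Rightarrow> ('y \<Rightarrow> 'x \<Rightarrow> 'm) \<Rightarrow> bool" where
  "distributor Q A B \<Phi> \<longleftrightarrow>
     (\<forall>x\<in>obj A. \<forall>y\<in>obj B. \<Phi> y x \<in> qhom Q (ty A x) (ty B y)) \<and>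
     (\<forall>x\<in>obj A. \<forall>y\<in>obj B. \<forall>y'\<in>obj B. qle Q (qcomp Q (hm B y' y) (\<Phi> y x)) (\<Phi> y' x)) \<and>
     (\<forall>x\<in>obj A. \<forall>x'\<in>obj A. \<forall>y\<in>obj B. qle Q (qcomp Q (\<Phi> y x) (hm A x x')) (\<Phi> y x'))"

definition dcomp :: "('o, 'm, 'z) quantaloid_scheme \<Rightarrow> ('x, 'o, 'm) qcat \<Rightarrow> ('y, 'o, 'm) qcat
     \<Rightarrow> ('w, 'o, 'm) qcat \<Rightarrow> ('w \<Rightarrow> 'y \<Rightarrow> 'm) \<Rightarrow> ('y \<Rightarrow> 'x \<Rightarrow> 'm) \<Rightarrow> ('w \<Rightarrow> 'x \<Rightarrow> 'm)" where
  "dcomp Q A B C \<Psi> \<Phi> = (\<lambda>z x. qsup Q (ty A x) (ty C z) ((\<lambda>y. qcomp Q (\<Psi> z y) (\<Phi> y x)) ` obj B))"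

definition dle :: "('o, 'm, 'z) quantaloid_scheme \<Rightarrow> ('x, 'o, 'm) qcat \<Rightarrow> ('y, 'o, 'm) qcat
     \<Rightarrow> ('y \<Rightarrow> 'x \<Rightarrow> 'm) \<Rightarrow> ('y \<Rightarrow> 'x \<Rightarrow> 'm) \<Rightarrow> bool" where
  "dle Q A B \<Phi> \<Phi>' \<longleftrightarrow> (\<forall>x\<in>obj A. \<forall>y\<in>obj B. qle Q (\<Phi> y x) (\<Phi>' y x))"

definition dadjoint :: "('o, 'm, 'z) quantaloid_scheme \<Rightarrow> ('x, 'o, 'm) qcat \<Rightarrow> ('y, 'o, 'm) qcat
     \<Rightarrow> ('y \<Rightarrow> 'x \<Rightarrow> 'm) \<Rightarrow> ('x \<Rightarrow> 'y \<Rightarrow> 'm) \<Rightarrow> bool" where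
  "dadjoint Q A B \<Phi> \<Phi>' \<longleftrightarrow>
     dle Q A A (hm A) (dcomp Q A B A \<Phi>' \<Phi>) \<and> dle Q B B (dcomp Q B A B \<Phi> \<Phi>') (hm B)"

definition dinv :: "('o, 'm, 'z) quantaloid_scheme \<Rightarrow> ('y \<Rightarrow> 'x \<Rightarrow> 'm) \<Rightarrow> ('x \<Rightarrow> 'y \<Rightarrow> 'm)" where
  "dinv Q \<Phi> = (\<lambda>x y. qinv Q (\<Phi> y x))"

definition sym_left_adjoint :: "('o, 'm, 'z) quantaloid_scheme \<Rightarrow> ('x, 'o, 'm) qcat \<Rightarrow> ('y, 'o, 'm) qcat
     \<Rightarrow> ('y \<Rightarrow> 'x \<Rightarrow> 'm) \<Rightarrow> bool" where
  "sym_left_adjoint Q A B \<Phi> \<longleftrightarrow> dadjoint Q A B \<Phi> (dinv Q \<Phi>)"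

definition symdist :: "('o, 'm, 'z) quantaloid_scheme \<Rightarrow> ('x, 'o, 'm) qcat \<Rightarrow> ('y, 'o, 'm) qcat
     \<Rightarrow> ('y \<Rightarrow> 'x \<Rightarrow> 'm) \<Rightarrow> ('x \<Rightarrow> 'y \<Rightarrow> 'm) \<Rightarrow> ('y \<Rightarrow> 'x \<Rightarrow> 'm)" where
  "symdist Q A B \<Psi> \<Psi>' = (\<lambda>b a. qmeet Q (ty A a) (ty B b) (\<Psi> b a) (qinv Q (\<Psi>' a b)))"

end

theory Submission
  imports Defs
begin

locale iq =
  fixes Q :: "('o, 'm, 'z) quantaloid_scheme"
  assumes iq: "involutive_quantaloid Q"
begin

lemma Q: "quantaloid Q" using iq[unfolded involutive_quantaloid_def, THEN conjunct1] .
lemmas Qc = Q[unfolded quantaloid_def]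
lemmas Ic = iq[unfolded involutive_quantaloid_def]

lemma comp_hom: "f \<in> qhom Q X Y \<Longrightarrow> g \<in> qhom Q Y Z \<Longrightarrow> qcomp Q g f \<in> qhom Q X Z"
  using Qc[THEN conjunct2, THEN conjunct1] by blast
lemma assoc: "f \<in> qhom Q W X \<Longrightarrow> g \<in> qhom Q X Y \<Longrightarrow> h \<in> qhom Q Y Z \<Longrightarrow>
        qcomp Q h (qcomp Q g f) = qcomp Q (qcomp Q h g) f"
  using Qc[THEN conjunct2, THEN conjunct2, THEN conjunct1] by blast
lemma id_hom: "qid Q X \<in> qhom Q X X" using Qc[THEN conjunct1] by blast
lemma id_r: "f \<in> qhom Q X Y \<Longrightarrow> qcomp Q f (qid Q X) = f"
  using Qc[THEN conjunct2, THEN conjunct2, THEN conjunct2, THEN conjunct1] by blast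
lemma id_l: "f \<in> qhom Q X Y \<Longrightarrow> qcomp Q (qid Q Y) f = f"
  using Qc[THEN conjunct2, THEN conjunct2, THEN conjunct2, THEN conjunct1] by blast
lemma refl: "f \<in> qhom Q X Y \<Longrightarrow> qle Q f f"
  using Qc[THEN conjunct2, THEN conjunct2, THEN conjunct2, THEN conjunct2, THEN conjunct1] by blast
lemma antisym: "f \<in> qhom Q X Y \<Longrightarrow> g \<in> qhom Q X Y \<Longrightarrow> qle Q f g \<Longrightarrow> qle Q g f \<Longrightarrow> f = g"
  using Qc[THEN conjunct2, THEN conjunct2, THEN conjunct2, THEN conjunct2, THEN conjunct2, THEN conjunct1] by blast
lemma trans: "f \<in> qhom Q X Y \<Longrightarrow> g \<in> qhom Q X Y \<Longrightarrow> h \<in> qhom Q X Y \<Longrightarrow>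
        qle Q f g \<Longrightarrow> qle Q g h \<Longrightarrow> qle Q f h"
  using Qc[THEN conjunct2, THEN conjunct2, THEN conjunct2, THEN conjunct2, THEN conjunct2, THEN conjunct2, THEN conjunct1] by blast
lemma sup_hom: "S \<subseteq> qhom Q X Y \<Longrightarrow> qsup Q X Y S \<in> qhom Q X Y"
  using Qc[THEN conjunct2, THEN conjunct2, THEN conjunct2, THEN conjunct2, THEN conjunct2, THEN conjunct2, THEN conjunct2, THEN conjunct1] by blast
lemma sup_upper: "S \<subseteq> qhom Q X Y \<Longrightarrow> f \<in> S \<Longrightarrow> qle Q f (qsup Q X Y S)"
  using Qc[THEN conjunct2, THEN conjunct2, THEN conjunct2, THEN conjunct2, THEN conjunct2, THEN conjunct2, THEN conjunct2, THEN conjunct1] by blast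
lemma sup_least: "S \<subseteq> qhom Q X Y \<Longrightarrow> g \<in> qhom Q X Y \<Longrightarrow> (\<And>f. f \<in> S \<Longrightarrow> qle Q f g) \<Longrightarrow> qle Q (qsup Q X Y S) g"
  using Qc[THEN conjunct2, THEN conjunct2, THEN conjunct2, THEN conjunct2, THEN conjunct2, THEN conjunct2, THEN conjunct2, THEN conjunct1] by blast
lemma comp_sup_l: "S \<subseteq> qhom Q X Y \<Longrightarrow> g \<in> qhom Q Y Z \<Longrightarrow>
        qcomp Q g (qsup Q X Y S) = qsup Q X Z ((\<lambda>f. qcomp Q g f) ` S)"
  using Qc[THEN conjunct2, THEN conjunct2, THEN conjunct2, THEN conjunct2, THEN conjunct2, THEN conjunct2, THEN conjunct2, THEN conjunct2, THEN conjunct1] by blast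
lemma comp_sup_r: "S \<subseteq> qhom Q Y Z \<Longrightarrow> g \<in> qhom Q X Y \<Longrightarrow>
        qcomp Q (qsup Q Y Z S) g = qsup Q X Z ((\<lambda>f. qcomp Q f g) ` S)"
  using Qc[THEN conjunct2, THEN conjunct2, THEN conjunct2, THEN conjunct2, THEN conjunct2, THEN conjunct2, THEN conjunct2, THEN conjunct2, THEN conjunct2] by blast
lemma inv_hom: "f \<in> qhom Q X Y \<Longrightarrow> qinv Q f \<in> qhom Q Y X"
  using Ic[THEN conjunct2, THEN conjunct1] by blast
lemma inv_mono: "f \<in> qhom Q X Y \<Longrightarrow> g \<in> qhom Q X Y \<Longrightarrow> qle Q f g \<Longrightarrow> qle Q (qinv Q f) (qinv Q g)"
  using Ic[THEN conjunct2, THEN conjunct2, THEN conjunct1] by blast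
lemma inv_comp: "f \<in> qhom Q X Y \<Longrightarrow> g \<in> qhom Q Y Z \<Longrightarrow>
        qinv Q (qcomp Q g f) = qcomp Q (qinv Q f) (qinv Q g)"
  using Ic[THEN conjunct2, THEN conjunct2, THEN conjunct2, THEN conjunct1] by blast
lemma inv_inv: "f \<in> qhom Q X Y \<Longrightarrow> qinv Q (qinv Q f) = f"
  using Ic[THEN conjunct2, THEN conjunct2, THEN conjunct2, THEN conjunct2] by blast

lemma inv_id: "qinv Q (qid Q X) = qid Q X"
proof -
  have h: "qinv Q (qid Q X) \<in> qhom Q X X" by (rule inv_hom[OF id_hom])
  have "qinv Q (qcomp Q (qid Q X) (qinv Q (qid Q X))) = qid Q X"
    using id_l[OF h] inv_inv[OF id_hom] by simp
  moreover have "qinv Q (qcomp Q (qid Q X) (qinv Q (qid Q X))) = qcomp Q (qid Q X) (qinv Q (qid Q X))"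
    using inv_comp[OF h id_hom] inv_inv[OF id_hom] by simp
  ultimately show ?thesis using id_l[OF h] by simp
qed

lemma sup2: "f \<in> qhom Q X Y \<Longrightarrow> g \<in> qhom Q X Y \<Longrightarrow> qle Q f g \<Longrightarrow> qsup Q X Y {f, g} = g"
  by (rule antisym) (auto intro!: sup_hom sup_least sup_upper refl)

lemma comp_mono_r: assumes "f \<in> qhom Q X Y" "f' \<in> qhom Q X Y" "qle Q f f'" "g \<in> qhom Q Y Z"
  shows "qle Q (qcomp Q g f) (qcomp Q g f')"
proof -
  have "qcomp Q g f' = qcomp Q g (qsup Q X Y {f, f'})" using sup2 assms by simp
  also have "\<dots> = qsup Q X Z {qcomp Q g f, qcomp Q g f'}" using comp_sup_l[of "{f,f'}"] assms by simp
  finally have e: "qcomp Q g f' = qsup Q X Z {qcomp Q g f, qcomp Q g f'}" .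
  have "qle Q (qcomp Q g f) (qsup Q X Z {qcomp Q g f, qcomp Q g f'})"
    by (rule sup_upper) (use assms in \<open>auto intro: comp_hom\<close>)
  then show ?thesis using e by simp
qed

lemma comp_mono_l: assumes "g \<in> qhom Q Y Z" "g' \<in> qhom Q Y Z" "qle Q g g'" "f \<in> qhom Q X Y"
  shows "qle Q (qcomp Q g f) (qcomp Q g' f)"
proof -
  have "qcomp Q g' f = qcomp Q (qsup Q Y Z {g, g'}) f" using sup2 assms by simp
  also have "\<dots> = qsup Q X Z {qcomp Q g f, qcomp Q g' f}" using comp_sup_r[of "{g,g'}"] assms by simp
  finally have e: "qcomp Q g' f = qsup Q X Z {qcomp Q g f, qcomp Q g' f}" .
  have "qle Q (qcomp Q g f) (qsup Q X Z {qcomp Q g f, qcomp Q g' f})"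
    by (rule sup_upper) (use assms in \<open>auto intro: comp_hom\<close>)
  then show ?thesis using e by simp
qed

lemma comp_mono: assumes "f \<in> qhom Q X Y" "f' \<in> qhom Q X Y" "qle Q f f'"
    "g \<in> qhom Q Y Z" "g' \<in> qhom Q Y Z" "qle Q g g'"
  shows "qle Q (qcomp Q g f) (qcomp Q g' f')"
  by (rule trans[OF _ _ _ comp_mono_r comp_mono_l]) (use assms in \<open>auto intro: comp_hom\<close>)

lemma meet_set: "{h \<in> qhom Q X Y. qle Q h f \<and> qle Q h g} \<subseteq> qhom Q X Y" by blast

lemma meet_hom: "qmeet Q X Y f g \<in> qhom Q X Y"
  unfolding qmeet_def by (rule sup_hom[OF meet_set])
lemma meet_le1: "f \<in> qhom Q X Y \<Longrightarrow> qle Q (qmeet Q X Y f g) f"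
  unfolding qmeet_def by (rule sup_least[OF meet_set]) auto
lemma meet_le2: "g \<in> qhom Q X Y \<Longrightarrow> qle Q (qmeet Q X Y f g) g"
  unfolding qmeet_def by (rule sup_least[OF meet_set]) auto
lemma meet_greatest: "h \<in> qhom Q X Y \<Longrightarrow> qle Q h f \<Longrightarrow> qle Q h g \<Longrightarrow> qle Q h (qmeet Q X Y f g)"
  unfolding qmeet_def by (rule sup_upper[OF meet_set]) auto

end

locale ctx = iq Q for Q :: "('o, 'm, 'z) quantaloid_scheme" +
  fixes A :: "('a, 'o, 'm) qcat" and B :: "('b, 'o, 'm) qcat"
    and \<Psi> :: "'b \<Rightarrow> 'a \<Rightarrow> 'm" and \<Psi>' :: "'a \<Rightarrow> 'b \<Rightarrow> 'm"
  assumes cA: "qcategory Q A" and cB: "qcategory Q B"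
    and dP: "distributor Q A B \<Psi>" and dP': "distributor Q B A \<Psi>'"
    and adj: "dadjoint Q A B \<Psi> \<Psi>'"
begin

abbreviation "Ps \<equiv> symdist Q A B \<Psi> \<Psi>'"

lemma hA: "x \<in> obj A \<Longrightarrow> y \<in> obj A \<Longrightarrow> hm A y x \<in> qhom Q (ty A x) (ty A y)"
  using cA unfolding qcategory_def by blast
lemma hB: "x \<in> obj B \<Longrightarrow> y \<in> obj B \<Longrightarrow> hm B y x \<in> qhom Q (ty B x) (ty B y)"
  using cB unfolding qcategory_def by blast
lemma idA: "x \<in> obj A \<Longrightarrow> qle Q (qid Q (ty A x)) (hm A x x)"
  using cA unfolding qcategory_def by blast
lemma hP: "x \<in> obj A \<Longrightarrow> y \<in> obj B \<Longrightarrow> \<Psi> y x \<in> qhom Q (ty A x) (ty B y)"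
  using dP unfolding distributor_def by blast
lemma hP': "x \<in> obj A \<Longrightarrow> y \<in> obj B \<Longrightarrow> \<Psi>' x y \<in> qhom Q (ty B y) (ty A x)"
  using dP' unfolding distributor_def by blast
lemma dPl: "x \<in> obj A \<Longrightarrow> y \<in> obj B \<Longrightarrow> y' \<in> obj B \<Longrightarrow> qle Q (qcomp Q (hm B y' y) (\<Psi> y x)) (\<Psi> y' x)"
  using dP unfolding distributor_def by blast
lemma dPr: "x \<in> obj A \<Longrightarrow> x' \<in> obj A \<Longrightarrow> y \<in> obj B \<Longrightarrow> qle Q (qcomp Q (\<Psi> y x) (hm A x x')) (\<Psi> y x')"
  using dP unfolding distributor_def by blast
lemma hPs: "Ps b a \<in> qhom Q (ty A a) (ty B b)"
  unfolding symdist_def by (rule meet_hom)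
lemma Ps1: "a \<in> obj A \<Longrightarrow> b \<in> obj B \<Longrightarrow> qle Q (Ps b a) (\<Psi> b a)"
  unfolding symdist_def by (rule meet_le1[OF hP])
lemma Ps2: "a \<in> obj A \<Longrightarrow> b \<in> obj B \<Longrightarrow> qle Q (qinv Q (Ps b a)) (\<Psi>' a b)"
proof -
  assume a: "a \<in> obj A" "b \<in> obj B"
  have "qle Q (Ps b a) (qinv Q (\<Psi>' a b))"
    unfolding symdist_def by (rule meet_le2[OF inv_hom[OF hP'[OF a]]])
  from inv_mono[OF hPs inv_hom[OF hP'[OF a]] this] show ?thesis using inv_inv[OF hP'[OF a]] by simp
qed

lemma adjB: "z \<in> obj B \<Longrightarrow> x \<in> obj B \<Longrightarrow> y \<in> obj A \<Longrightarrow> qle Q (qcomp Q (\<Psi> z y) (\<Psi>' y x)) (hm B z x)"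
proof -
  assume a: "z \<in> obj B" "x \<in> obj B" "y \<in> obj A"
  have S: "(\<lambda>y. qcomp Q (\<Psi> z y) (\<Psi>' y x)) ` obj A \<subseteq> qhom Q (ty B x) (ty B z)"
    using a by (auto intro: comp_hom hP hP')
  have "qle Q (dcomp Q B A B \<Psi> \<Psi>' z x) (hm B z x)"
    using adj a unfolding dadjoint_def dle_def by blast
  then show ?thesis using a S unfolding dcomp_def
    by (auto intro!: trans[OF _ _ _ sup_upper[OF S]] sup_hom hB comp_hom hP hP')
qed

lemma L1: "z \<in> obj B \<Longrightarrow> x \<in> obj B \<Longrightarrow> y \<in> obj A \<Longrightarrow> qle Q (qcomp Q (Ps z y) (qinv Q (Ps x y))) (hm B z x)"
  by (rule trans[OF _ _ _ comp_mono[OF inv_hom[OF hPs] hP' Ps2 hPs hP Ps1] adjB])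
     (auto intro: comp_hom inv_hom hPs hP hP' hB)

lemma L2: "z \<in> obj B \<Longrightarrow> x \<in> obj B \<Longrightarrow> y \<in> obj A \<Longrightarrow>
   qle Q (qcomp Q (Ps z y) (qinv Q (Ps x y))) (qinv Q (hm B x z))"
proof -
  assume a: "z \<in> obj B" "x \<in> obj B" "y \<in> obj A"
  have e: "qinv Q (qcomp Q (Ps x y) (qinv Q (Ps z y))) = qcomp Q (Ps z y) (qinv Q (Ps x y))"
    using inv_comp[OF inv_hom[OF hPs] hPs] inv_inv[OF hPs] by simp
  show ?thesis using inv_mono[OF comp_hom[OF inv_hom[OF hPs] hPs] hB L1[OF a(2,1,3)]] a e by simp
qed

lemma part1: "dle Q (symcat Q B) (symcat Q B)
           (dcomp Q (symcat Q B) (symcat Q A) (symcat Q B) Ps (dinv Q Ps)) (hm (symcat Q B))"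
  unfolding dle_def
proof (intro ballI)
  fix x z assume a: "x \<in> obj (symcat Q B)" "z \<in> obj (symcat Q B)"
  hence a: "x \<in> obj B" "z \<in> obj B" by (auto simp: symcat_def)
  have S: "(\<lambda>y. qcomp Q (Ps z y) (qinv Q (Ps x y))) ` obj A \<subseteq> qhom Q (ty B x) (ty B z)"
    by (auto intro: comp_hom inv_hom hPs)
  show "qle Q (dcomp Q (symcat Q B) (symcat Q A) (symcat Q B) Ps (dinv Q Ps) z x) (hm (symcat Q B) z x)"
    unfolding dcomp_def dinv_def
    apply (simp add: symcat_def)
    apply (rule sup_least[OF S[unfolded symcat_def, simplified]])
     apply (rule meet_hom)
    using a by (auto intro!: meet_greatest comp_hom inv_hom hPs L1 L2)
qed

lemma part2: "sym_left_adjoint Q (symcat Q A) (symcat Q B) Ps \<longleftrightarrow>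
           dle Q (symcat Q A) (symcat Q A) (hm (symcat Q A))
             (dcomp Q (symcat Q A) (symcat Q B) (symcat Q A) (dinv Q Ps) Ps)"
  unfolding sym_left_adjoint_def dadjoint_def using part1 by blast

lemma part3:
  assumes sl: "sym_left_adjoint Q (symcat Q A) (symcat Q B) Ps" and a: "a \<in> obj A" and b: "b \<in> obj B"
  shows "\<Psi> b a = qsup Q (ty A a) (ty B b)
                {qcomp Q (hm B b b') (qcomp Q (Ps b' a') (hm A a' a)) | a' b'.
                   a' \<in> obj A \<and> b' \<in> obj B}"
proof -
  let ?T = "{qcomp Q (hm B b b') (qcomp Q (Ps b' a') (hm A a' a)) | a' b'. a' \<in> obj A \<and> b' \<in> obj B}"
  have T: "?T \<subseteq> qhom Q (ty A a) (ty B b)" using a b by (auto intro!: comp_hom hB hA hPs)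
  let ?S = "(\<lambda>b'. qcomp Q (qinv Q (Ps b' a)) (Ps b' a)) ` obj B"
  have S: "?S \<subseteq> qhom Q (ty A a) (ty A a)" by (auto intro: comp_hom inv_hom hPs)
  have "qle Q (hm (symcat Q A) a a)
     (dcomp Q (symcat Q A) (symcat Q B) (symcat Q A) (dinv Q Ps) Ps a a)"
    using sl a unfolding part2 dle_def by (auto simp: symcat_def)
  hence 1: "qle Q (qmeet Q (ty A a) (ty A a) (hm A a a) (qinv Q (hm A a a))) (qsup Q (ty A a) (ty A a) ?S)"
    unfolding dcomp_def dinv_def by (simp add: symcat_def)
  have 2: "qle Q (qid Q (ty A a)) (qmeet Q (ty A a) (ty A a) (hm A a a) (qinv Q (hm A a a)))"
    using a inv_mono[OF id_hom hA[OF a a] idA[OF a]] inv_id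
    by (auto intro!: meet_greatest id_hom idA hA inv_hom)
  have 3: "qle Q (qid Q (ty A a)) (qsup Q (ty A a) (ty A a) ?S)"
    by (rule trans[OF _ _ _ 2 1]) (auto intro: id_hom meet_hom sup_hom[OF S])
  have "qle Q (\<Psi> b a) (qcomp Q (\<Psi> b a) (qsup Q (ty A a) (ty A a) ?S))"
    using comp_mono_r[OF id_hom sup_hom[OF S] 3 hP[OF a b]] id_r[OF hP[OF a b]] by simp
  also have "qcomp Q (\<Psi> b a) (qsup Q (ty A a) (ty A a) ?S) =
     qsup Q (ty A a) (ty B b) ((\<lambda>f. qcomp Q (\<Psi> b a) f) ` ?S)"
    by (rule comp_sup_l[OF S hP[OF a b]])
  finally have le1: "qle Q (\<Psi> b a) (qsup Q (ty A a) (ty B b) ((\<lambda>f. qcomp Q (\<Psi> b a) f) ` ?S))" .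
  have S2: "(\<lambda>f. qcomp Q (\<Psi> b a) f) ` ?S \<subseteq> qhom Q (ty A a) (ty B b)"
    using a b by (auto intro!: comp_hom hP inv_hom hPs)
  have le2: "qle Q (qsup Q (ty A a) (ty B b) ((\<lambda>f. qcomp Q (\<Psi> b a) f) ` ?S)) (qsup Q (ty A a) (ty B b) ?T)"
  proof (rule sup_least[OF S2 sup_hom[OF T]])
    fix f assume "f \<in> (\<lambda>f. qcomp Q (\<Psi> b a) f) ` ?S"
    then obtain b' where b': "b' \<in> obj B" and f: "f = qcomp Q (\<Psi> b a) (qcomp Q (qinv Q (Ps b' a)) (Ps b' a))"
      by auto
    have e: "f = qcomp Q (qcomp Q (\<Psi> b a) (qinv Q (Ps b' a))) (Ps b' a)"
      using f assoc[OF hPs inv_hom[OF hPs] hP[OF a b]] by simp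
    have i1: "qle Q (qcomp Q (\<Psi> b a) (qinv Q (Ps b' a))) (hm B b b')"
      by (rule trans[OF _ _ _ comp_mono_r[OF inv_hom[OF hPs] hP' Ps2 hP] adjB])
         (use a b b' in \<open>auto intro: comp_hom inv_hom hPs hP hP' hB\<close>)
    have i2: "qle Q f (qcomp Q (hm B b b') (Ps b' a))"
      unfolding e by (rule comp_mono_l[OF _ _ i1 hPs]) (use a b b' in \<open>auto intro: comp_hom inv_hom hPs hP hB\<close>)
    have i3: "qle Q (qcomp Q (hm B b b') (Ps b' a)) (qcomp Q (hm B b b') (qcomp Q (Ps b' a) (hm A a a)))"
    proof -
      have "qle Q (Ps b' a) (qcomp Q (Ps b' a) (hm A a a))"
        using comp_mono_r[OF id_hom hA[OF a a] idA[OF a] hPs[of b' a]] id_r[OF hPs[of b' a]] by simp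
      then show ?thesis
        by (rule comp_mono_r[OF hPs comp_hom[OF hA[OF a a] hPs] _ hB[OF b' b]])
    qed
    have i4: "qle Q (qcomp Q (hm B b b') (qcomp Q (Ps b' a) (hm A a a))) (qsup Q (ty A a) (ty B b) ?T)"
      by (rule sup_upper[OF T]) (use a b' in blast)
    show "qle Q f (qsup Q (ty A a) (ty B b) ?T)"
      by (rule trans[OF _ _ _ i2 trans[OF _ _ _ i3 i4]])
         (use a b b' e in \<open>auto intro!: comp_hom inv_hom hPs hP hB hA sup_hom[OF T]\<close>)
  qed
  have ge: "qle Q (qsup Q (ty A a) (ty B b) ?T) (\<Psi> b a)"
  proof (rule sup_least[OF T hP[OF a b]])
    fix f assume "f \<in> ?T"
    then obtain a' b' where ab: "a' \<in> obj A" "b' \<in> obj B"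
      and f: "f = qcomp Q (hm B b b') (qcomp Q (Ps b' a') (hm A a' a))" by blast
    have j1: "qle Q f (qcomp Q (hm B b b') (qcomp Q (\<Psi> b' a') (hm A a' a)))"
      unfolding f using ab a b
      by (auto intro!: comp_mono_r comp_mono_l comp_hom hA hB hPs hP Ps1)
    have j2: "qle Q (qcomp Q (hm B b b') (qcomp Q (\<Psi> b' a') (hm A a' a))) (qcomp Q (hm B b b') (\<Psi> b' a))"
      using ab a b by (auto intro!: comp_mono_r dPr comp_hom hA hB hP)
    show "qle Q f (\<Psi> b a)"
      by (rule trans[OF _ _ _ j1 trans[OF _ _ _ j2 dPl]])
         (use ab a b f in \<open>auto intro!: comp_hom hA hB hPs hP\<close>)
  qed
  show ?thesis
    by (rule antisym[OF hP[OF a b] sup_hom[OF T] trans[OF hP[OF a b] sup_hom[OF S2] sup_hom[OF T] le1 le2] ge])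
qed

end

theorem lemma3p5:
  fixes Q :: "('o, 'm, 'z) quantaloid_scheme"
    and A :: "('a, 'o, 'm) qcat" and B :: "('b, 'o, 'm) qcat"
    and \<Psi> :: "'b \<Rightarrow> 'a \<Rightarrow> 'm" and \<Psi>' :: "'a \<Rightarrow> 'b \<Rightarrow> 'm"
  assumes "involutive_quantaloid Q"
    and "qcategory Q A" and "qcategory Q B"
    and "distributor Q A B \<Psi>" and "distributor Q B A \<Psi>'"
    and "dadjoint Q A B \<Psi> \<Psi>'"
  shows "dle Q (symcat Q B) (symcat Q B)
           (dcomp Q (symcat Q B) (symcat Q A) (symcat Q B)
              (symdist Q A B \<Psi> \<Psi>') (dinv Q (symdist Q A B \<Psi> \<Psi>')))
           (hm (symcat Q B))
       \<and> (sym_left_adjoint Q (symcat Q A) (symcat Q B) (symdist Q A B \<Psi> \<Psi>') \<longleftrightarrow>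
           dle Q (symcat Q A) (symcat Q A) (hm (symcat Q A))
             (dcomp Q (symcat Q A) (symcat Q B) (symcat Q A)
                (dinv Q (symdist Q A B \<Psi> \<Psi>')) (symdist Q A B \<Psi> \<Psi>')))
       \<and> (sym_left_adjoint Q (symcat Q A) (symcat Q B) (symdist Q A B \<Psi> \<Psi>') \<longrightarrow>
           (\<forall>a\<in>obj A. \<forall>b\<in>obj B.
              \<Psi> b a = qsup Q (ty A a) (ty B b)
                {qcomp Q (hm B b b') (qcomp Q (symdist Q A B \<Psi> \<Psi>' b' a') (hm A a' a)) | a' b'.
                   a' \<in> obj A \<and> b' \<in> obj B}))"
proof -
  interpret ctx Q A B \<Psi> \<Psi>' using assms by (unfold_locales) auto
  show ?thesis using part1 part2 part3 by blast
qed

end
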